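(* Let $n = 2g+2$ for an integer $g\ge 0$, and let $\mathcal{J}[2]$ be the $S_n$-module of subsets of $\{1,\dots,n\}$ modulo complements, with group law induced by symmetric difference and $S_n$ acting by permuting $\{1,\dots,n\}$. Then $H^1_*(S_n,\mathcal{J}[2]) = 0$.
   Context: For a finite group $G$ and $G$-module $M$, $H^1_*(G,M) := \ker\big(H^1(G,M)\to\prod_{g\in G}H^1(\langle g\rangle,M)\big)$, the map being the product of restrictions to cyclic subgroups. *)

theory Defs
  imports "HOL-Algebra.Sym_Groups" "HOL-Algebra.Generated_Groups"
begin

text \<open>Group cohomology H^1 via crossed homomorphisms (1-cocycles) modulo
principal ones (1-coboundaries). The module M is an abelian group written
multiplicatively (HOL-Algebra monoid record), G acts via act.\<close>

definition crossed_hom ::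
  "('g,'x) monoid_scheme \<Rightarrow> ('m,'y) monoid_scheme \<Rightarrow> ('g \<Rightarrow> 'm \<Rightarrow> 'm) \<Rightarrow> ('g \<Rightarrow> 'm) \<Rightarrow> bool" where
  "crossed_hom G M act f \<longleftrightarrow> f \<in> carrier G \<rightarrow> carrier M \<and>
     (\<forall>g\<in>carrier G. \<forall>h\<in>carrier G. f (g \<otimes>\<^bsub>G\<^esub> h) = f g \<otimes>\<^bsub>M\<^esub> act g (f h))"

definition principal_on ::
  "('m,'y) monoid_scheme \<Rightarrow> ('g \<Rightarrow> 'm \<Rightarrow> 'm) \<Rightarrow> 'g set \<Rightarrow> ('g \<Rightarrow> 'm) \<Rightarrow> bool" where
  "principal_on M act S f \<longleftrightarrow>
     (\<exists>m\<in>carrier M. \<forall>g\<in>S. f g = act g m \<otimes>\<^bsub>M\<^esub> inv\<^bsub>M\<^esub> m)"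

text \<open>H^1_*(G,M) = 0: every cocycle whose class restricts to zero in
H^1(<g>,M) for all g is a coboundary.\<close>
definition H1_star_trivial ::
  "('g,'x) monoid_scheme \<Rightarrow> ('m,'y) monoid_scheme \<Rightarrow> ('g \<Rightarrow> 'm \<Rightarrow> 'm) \<Rightarrow> bool" where
  "H1_star_trivial G M act \<longleftrightarrow>
     (\<forall>f. crossed_hom G M act f \<and>
          (\<forall>g\<in>carrier G. principal_on M act (generate G {g}) f)
          \<longrightarrow> principal_on M act (carrier G) f)"

definition J2 :: "nat \<Rightarrow> nat set set monoid" where
  "J2 n = \<lparr> carrier = {{A, {1..n} - A} | A. A \<subseteq> {1..n}},
            mult = (\<lambda>X Y. {C. \<exists>A\<in>X. \<exists>B\<in>Y. C = (A - B) \<union> (B - A)}),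
            one = {{}, {1..n}} \<rparr>"

definition J2_act :: "(nat \<Rightarrow> nat) \<Rightarrow> nat set set \<Rightarrow> nat set set" where
  "J2_act \<sigma> X = (\<lambda>A. \<sigma> ` A) ` X"

end

theory Submission
  imports Defs
begin

definition cls :: "nat set \<Rightarrow> nat set \<Rightarrow> nat set set" where
  "cls N A = {A, N - A}"

lemma J2_carrier: "carrier (J2 n) = {cls {1..n} A | A. A \<subseteq> {1..n}}"
  by (simp add: J2_def cls_def)

lemma J2_one: "one (J2 n) = cls {1..n} {}"
  by (simp add: J2_def cls_def)

lemma J2_mult:
  assumes "A \<subseteq> {1..n}" "B \<subseteq> {1..n}"
  shows "cls {1..n} A \<otimes>\<^bsub>J2 n\<^esub> cls {1..n} B = cls {1..n} ((A - B) \<union> (B - A))"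
  using assms unfolding J2_def cls_def by auto

lemma cls_eq:
  assumes "A \<subseteq> N" "B \<subseteq> N"
  shows "cls N A = cls N B \<longleftrightarrow> A = B \<or> A = N - B"
  using assms unfolding cls_def doubleton_eq_iff by auto

lemma cls_compl: "A \<subseteq> N \<Longrightarrow> cls N (N - A) = cls N A"
  unfolding cls_def by (auto simp: double_diff)

lemma J2_act_cls:
  assumes "s permutes {1..n}" "A \<subseteq> {1..n}"
  shows "J2_act s (cls {1..n} A) = cls {1..n} (s ` A)"
proof -
  have "s ` ({1..n} - A) = {1..n} - s ` A"
    using assms by (simp add: image_set_diff permutes_inj permutes_image)
  then show ?thesis by (simp add: J2_act_def cls_def)
qed

lemma J2_inv:
  assumes A: "A \<subseteq> {1..n}"
  shows "inv\<^bsub>J2 n\<^esub> (cls {1..n} A) = cls {1..n} A"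
  unfolding m_inv_def
proof (rule the_equality)
  show "cls {1..n} A \<in> carrier (J2 n) \<and> cls {1..n} A \<otimes>\<^bsub>J2 n\<^esub> cls {1..n} A = \<one>\<^bsub>J2 n\<^esub> \<and>
    cls {1..n} A \<otimes>\<^bsub>J2 n\<^esub> cls {1..n} A = \<one>\<^bsub>J2 n\<^esub>"
  proof -
    have "cls {1..n} A \<otimes>\<^bsub>J2 n\<^esub> cls {1..n} A = cls {1..n} {}"
      using J2_mult[OF A A] by simp
    then show ?thesis using A unfolding J2_one J2_carrier by blast
  qed
next
  fix y assume y: "y \<in> carrier (J2 n) \<and> cls {1..n} A \<otimes>\<^bsub>J2 n\<^esub> y = \<one>\<^bsub>J2 n\<^esub> \<and> y \<otimes>\<^bsub>J2 n\<^esub> cls {1..n} A = \<one>\<^bsub>J2 n\<^esub>"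
  then obtain B where B: "B \<subseteq> {1..n}" "y = cls {1..n} B" by (auto simp: J2_carrier)
  have "cls {1..n} ((A - B) \<union> (B - A)) = cls {1..n} {}"
    using y unfolding B(2) J2_mult[OF A B(1)] J2_one by blast
  then have "(A - B) \<union> (B - A) = {} \<or> (A - B) \<union> (B - A) = {1..n}"
    using A B by (subst (asm) cls_eq) auto
  then have "B = A \<or> B = {1..n} - A" using A B by auto
  then show "y = cls {1..n} A" using B A cls_compl by auto
qed

lemma transp_diff:
  "(transpose a b ` B - B) \<union> (B - transpose a b ` B) =
     (if (a \<in> B) = (b \<in> B) then {} else {a, b})"
  by (auto simp: transpose_def image_iff split: if_splits)

lemma image_symdiff:
  "inj s \<Longrightarrow> s ` ((X - Y) \<union> (Y - X)) = (s ` X - s ` Y) \<union> (s ` Y - s ` X)"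
  by (simp add: image_Un image_set_diff)

lemmas J2_mult' = J2_mult J2_mult[simplified]
lemmas J2_act_cls' = J2_act_cls J2_act_cls[simplified]
lemmas J2_inv' = J2_inv J2_inv[simplified]

lemma transp_conj: "(a::nat) \<noteq> b \<Longrightarrow> b \<noteq> 1 \<Longrightarrow> transpose a b = transpose 1 a \<circ> transpose 1 b \<circ> transpose 1 a"
  apply (rule ext)
  subgoal for x
    by (cases "x = a"; cases "x = b"; cases "x = 1"; cases "a = 1") (simp_all add: transpose_def)
  done

lemma main:
  assumes n: "n \<ge> 1"
  shows "H1_star_trivial (sym_group n) (J2 n) J2_act"
  unfolding H1_star_trivial_def
proof (intro allI impI, elim conjE)
  let ?G = "sym_group n" and ?M = "J2 n" and ?N = "{1..n}"
  fix f assume ch: "crossed_hom ?G ?M J2_act f"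
    and loc: "\<forall>g\<in>carrier ?G. principal_on ?M J2_act (generate ?G {g}) f"
  have fc: "\<And>s. s permutes ?N \<Longrightarrow> \<exists>F. F \<subseteq> ?N \<and> f s = cls ?N F"
  proof -
    fix s assume "s permutes ?N"
    then have "s \<in> carrier ?G" by (simp add: sym_group_carrier)
    then have "f s \<in> carrier ?M" using ch unfolding crossed_hom_def by blast
    then show "\<exists>F. F \<subseteq> ?N \<and> f s = cls ?N F" unfolding J2_carrier by blast
  qed
  have fm: "\<And>s t. s permutes ?N \<Longrightarrow> t permutes ?N \<Longrightarrow> f (s \<circ> t) = f s \<otimes>\<^bsub>?M\<^esub> J2_act s (f t)"
    using ch unfolding crossed_hom_def by (auto simp: sym_group_carrier sym_group_mult)
  have idp: "id permutes ?N" by (simp add: permutes_id)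
  have fid: "f id = cls ?N {}"
  proof -
    obtain F where F: "F \<subseteq> ?N" "f id = cls ?N F" using fc[OF idp] by auto
    have "f id = f (id \<circ> id)" by simp
    also have "\<dots> = f id \<otimes>\<^bsub>?M\<^esub> J2_act id (f id)" using fm[OF idp idp] .
    also have "\<dots> = cls ?N F \<otimes>\<^bsub>?M\<^esub> cls ?N F" using F by (simp add: J2_act_def)
    also have "\<dots> = cls ?N {}" using F by (simp add: J2_mult')
    finally show ?thesis .
  qed
  have star: "f (transpose 1 i) = cls ?N {} \<or> f (transpose 1 i) = cls ?N {1, i}"
    if i: "i \<in> ?N" for i
  proof -
    let ?t = "transpose 1 i"
    have tp: "?t permutes ?N" using i n by (intro permutes_swap_id) auto
    then have tc: "?t \<in> carrier ?G" by (simp add: sym_group_carrier)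
    have "?t \<in> generate ?G {?t}" by (rule generate.incl) simp
    with loc tc obtain m where m: "m \<in> carrier ?M" "f ?t = J2_act ?t m \<otimes>\<^bsub>?M\<^esub> inv\<^bsub>?M\<^esub> m"
      unfolding principal_on_def by blast
    then obtain B where B: "B \<subseteq> ?N" "m = cls ?N B" by (auto simp: J2_carrier)
    have tB: "?t ` B \<subseteq> ?N" using tp B permutes_image by blast
    have "f ?t = cls ?N ((?t ` B - B) \<union> (B - ?t ` B))"
      using m B tp tB by (simp add: J2_act_cls' J2_inv' J2_mult')
    then show ?thesis by (simp add: transp_diff split: if_splits)
  qed
  define A0 where "A0 = {i \<in> ?N. i \<noteq> 1 \<and> f (transpose 1 i) = cls ?N {1, i}}"
  have A0N: "A0 \<subseteq> ?N" by (auto simp: A0_def)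
  define P where "P s \<longleftrightarrow> f s = cls ?N ((s ` A0 - A0) \<union> (A0 - s ` A0))" for s
  have Pid: "P id" by (simp add: P_def fid)
  have Pmult: "P (s \<circ> t)" if s: "s permutes ?N" and t: "t permutes ?N" and "P s" "P t" for s t
  proof -
    have sA: "s ` A0 \<subseteq> ?N" using s A0N permutes_image by blast
    have tA: "t ` A0 \<subseteq> ?N" using t A0N permutes_image by blast
    have stA: "s ` t ` A0 \<subseteq> ?N" using s tA permutes_image by blast
    have inj: "inj s" using s permutes_inj by blast
    have "f (s \<circ> t) = cls ?N ((s ` A0 - A0) \<union> (A0 - s ` A0)) \<otimes>\<^bsub>?M\<^esub>
         J2_act s (cls ?N ((t ` A0 - A0) \<union> (A0 - t ` A0)))"
      using fm[OF s t] \<open>P s\<close> \<open>P t\<close> by (simp add: P_def)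
    also have "\<dots> = cls ?N ((s ` A0 - A0) \<union> (A0 - s ` A0)) \<otimes>\<^bsub>?M\<^esub>
         cls ?N ((s ` t ` A0 - s ` A0) \<union> (s ` A0 - s ` t ` A0))"
    proof -
      have "J2_act s (cls ?N ((t ` A0 - A0) \<union> (A0 - t ` A0))) = cls ?N (s ` ((t ` A0 - A0) \<union> (A0 - t ` A0)))"
        by (rule J2_act_cls[OF s]) (use tA A0N in auto)
      then show ?thesis by (simp only: image_symdiff[OF inj])
    qed
    also have "\<dots> = cls ?N (((s ` A0 - A0) \<union> (A0 - s ` A0)) - ((s ` t ` A0 - s ` A0) \<union> (s ` A0 - s ` t ` A0))
        \<union> (((s ` t ` A0 - s ` A0) \<union> (s ` A0 - s ` t ` A0)) - ((s ` A0 - A0) \<union> (A0 - s ` A0))))"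
      by (rule J2_mult') (use sA stA A0N in auto)
    also have "\<dots> = cls ?N (((s \<circ> t) ` A0 - A0) \<union> (A0 - (s \<circ> t) ` A0))"
      by (rule arg_cong[where f="cls ?N"]) (auto simp: image_comp[symmetric])
    finally show ?thesis by (simp add: P_def)
  qed
  have Pstar: "P (transpose 1 i)" if i: "i \<in> ?N" for i
  proof (cases "i = 1")
    case True then show ?thesis using Pid by simp
  next
    case False
    have "1 \<notin> A0" by (auto simp: A0_def)
    show ?thesis
    proof (cases "i \<in> A0")
      case True
      then show ?thesis using \<open>1 \<notin> A0\<close> False unfolding P_def
        by (subst transp_diff) (auto simp: A0_def)
    next
      case nA: False
      then have "f (transpose 1 i) \<noteq> cls ?N {1, i}" using i False by (auto simp: A0_def)
      then have "f (transpose 1 i) = cls ?N {}" using star[OF i] by auto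
      then show ?thesis using \<open>1 \<notin> A0\<close> nA unfolding P_def
        by (subst transp_diff) auto
    qed
  qed
  have Ptr: "P (transpose a b)" if a: "a \<in> ?N" and b: "b \<in> ?N" for a b
  proof -
    have one: "1 \<in> ?N" using n by auto
    consider "a = b" | "b = 1" | "a \<noteq> b" "b \<noteq> 1" by blast
    then show ?thesis
    proof cases
      case 1 then show ?thesis using Pid by simp
    next
      case 2 then show ?thesis using Pstar[OF a] by (simp add: transpose_commute)
    next
      case 3
      have "transpose a b = transpose 1 a \<circ> transpose 1 b \<circ> transpose 1 a"
        using 3 by (rule transp_conj)
      moreover have "P (transpose 1 a \<circ> transpose 1 b \<circ> transpose 1 a)"
      proof -
        have pa: "transpose 1 a permutes ?N" by (rule permutes_swap_id[OF one a])
        have pb: "transpose 1 b permutes ?N" by (rule permutes_swap_id[OF one b])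
        have q: "P (transpose 1 a \<circ> transpose 1 b)" by (rule Pmult[OF pa pb Pstar[OF a] Pstar[OF b]])
        have pab: "transpose 1 a \<circ> transpose 1 b permutes ?N" by (rule permutes_compose[OF pb pa])
        show ?thesis by (rule Pmult[OF pab pa q Pstar[OF a]])
      qed
      ultimately show ?thesis by simp
    qed
  qed
  have Pall: "P p" if p: "p permutes ?N" for p
    using p finite_atLeastAtMost
  proof (induction rule: permutes_induct)
    case id then show ?case by (rule Pid)
  next
    case (swap a b p)
    show ?case by (rule Pmult[OF permutes_swap_id[OF swap(1,2)] swap(4) Ptr[OF swap(1,2)] swap(5)])
  qed
  show "principal_on ?M J2_act (carrier ?G) f"
    unfolding principal_on_def
  proof (intro bexI ballI)
    show "cls ?N A0 \<in> carrier ?M" using A0N by (auto simp: J2_carrier)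
    fix s assume "s \<in> carrier ?G"
    then have s: "s permutes ?N" by (simp add: sym_group_carrier)
    have sA: "s ` A0 \<subseteq> ?N" using s A0N permutes_image by blast
    show "f s = J2_act s (cls ?N A0) \<otimes>\<^bsub>?M\<^esub> inv\<^bsub>?M\<^esub> cls ?N A0"
      using Pall[OF s] s A0N sA by (simp add: P_def J2_act_cls' J2_inv' J2_mult')
  qed
qed

theorem lemma2:
  fixes g :: nat
  shows "H1_star_trivial (sym_group (2 * g + 2)) (J2 (2 * g + 2)) J2_act"
  by (rule main) simp

end
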